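(* Let $\epsilon>0$ and $\delta>0$ be arbitrary, and consider the open subset $B(\epsilon)\times\mathbb D_{<\delta}(T^*S^1)$ of $(\mathbb R^3\times T^*S^1,\ker(\alpha_{\mathrm{OT}}+\lambda_{\mathrm{can}}))$, a neighborhood of $\mathbb D_{\mathrm{OT}}\times S^1$. Then for every $C>0$ there is an embedding of the hypersurface $S_C=\mathbb D^2_{\le\pi}\times(-C,C)\times(-\tfrac{\delta}{2},\tfrac{\delta}{2})$ into $B(\epsilon)\times\mathbb D_{<\delta}(T^*S^1)$ such that the contact structure induces on $S_C$ the singular distribution $\ker(r\sin r\,d\vartheta-t\,ds)$, where $(r,\vartheta)$ are polar coordinates on the disk and $(s,t)$ are the coordinates on $(-C,C)\times(-\tfrac\delta2,\tfrac\delta2)$.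
   Context: $\alpha_{\mathrm{OT}}=\cos r\,dz+r\sin r\,d\vartheta$ on $\mathbb R^3$ in cylindrical coordinates $(r,\vartheta,z)$; $\mathbb D_{\mathrm{OT}}=\{r\le\pi,z=0\}$. Fix a small $\delta_0>0$ and set $B(h)=\mathbb D^2_{<\pi+\delta_0}\times(-h,h)\subset\mathbb R^3$ for $h>0$ (a cylindrical box around $\mathbb D_{\mathrm{OT}}$). On $T^*S^1$ use coordinates $(q,p)$, $q\in\mathbb R/2\pi\mathbb Z$, with $\lambda_{\mathrm{can}}=-p\,dq$, and $\mathbb D_{<\delta}(T^*S^1)=\{|p|<\delta\}$. The induced singular distribution of an embedding $\iota$ is $(D\iota)^{-1}(\xi)$ (the kernel of a vanishing form is the whole tangent space). *)

theory Defs
  imports "HOL-Analysis.Analysis"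
begin

fun Ck_on :: "nat \<Rightarrow> 'a::euclidean_space set \<Rightarrow> ('a \<Rightarrow> 'b::euclidean_space) \<Rightarrow> bool" where
  "Ck_on 0 U f = continuous_on U f"
| "Ck_on (Suc k) U f = (\<exists>f'. (\<forall>x\<in>U. (f has_derivative f' x) (at x)) \<and> (\<forall>v. Ck_on k U (\<lambda>x. f' x v)))"

definition smooth_open :: "'a::euclidean_space set \<Rightarrow> ('a \<Rightarrow> 'b::euclidean_space) \<Rightarrow> bool" where
  "smooth_open U f \<longleftrightarrow> open U \<and> (\<forall>k. Ck_on k U f)"

definition sinc :: "real \<Rightarrow> real" where
  "sinc r = (if r = 0 then 1 else sin r / r)"

(* Points of R^3 x T^*S^1, lifted to the universal cover: (x,y,z,q,p), q \<in> R.
   alpha_OT + lambda_can = cos r dz + r sin r d\<theta> - p dq, written in Cartesian coordinates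
   (r sin r d\<theta> = (sin r / r)(x dy - y dx)). *)
definition contact_form :: "real \<times> real \<times> real \<times> real \<times> real \<Rightarrow> real \<times> real \<times> real \<times> real \<times> real \<Rightarrow> real" where
  "contact_form P V = (case P of (x,y,z,q,p) \<Rightarrow> case V of (X,Y,Z,Q,PP) \<Rightarrow>
      (let r = sqrt (x\<^sup>2 + y\<^sup>2) in cos r * Z + sinc r * (x * Y - y * X) - p * Q))"

(* projection from the lift to R^3 x T^*S^1, with S^1 = unit circle in C, q \<mapsto> cis q *)
definition proj_TS1 :: "real \<times> real \<times> real \<times> real \<times> real \<Rightarrow> real \<times> real \<times> real \<times> complex \<times> real" where
  "proj_TS1 P = (case P of (x,y,z,q,p) \<Rightarrow> (x,y,z,cis q,p))"

(* lift of B(\<epsilon>) x D_{<\<delta>}(T^*S^1), with B(h) = D^2_{<\<pi>+\<delta>0} x (-h,h) *)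
definition target_set :: "real \<Rightarrow> real \<Rightarrow> real \<Rightarrow> (real \<times> real \<times> real \<times> real \<times> real) set" where
  "target_set \<delta>0 \<epsilon> \<delta> = {(x,y,z,q,p). x\<^sup>2 + y\<^sup>2 < (pi + \<delta>0)\<^sup>2 \<and> \<bar>z\<bar> < \<epsilon> \<and> \<bar>p\<bar> < \<delta>}"

definition S_C :: "real \<Rightarrow> real \<Rightarrow> (real \<times> real \<times> real \<times> real) set" where
  "S_C C \<delta> = {(u,v,s,t). u\<^sup>2 + v\<^sup>2 \<le> pi\<^sup>2 \<and> -C < s \<and> s < C \<and> -(\<delta>/2) < t \<and> t < \<delta>/2}"

(* r sin r d\<theta> - t ds in Cartesian coordinates *)
definition beta_form :: "real \<times> real \<times> real \<times> real \<Rightarrow> real \<times> real \<times> real \<times> real \<Rightarrow> real" where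
  "beta_form W V = (case W of (u,v,s,t) \<Rightarrow> case V of (U,VV,SS,T) \<Rightarrow>
      sinc (sqrt (u\<^sup>2 + v\<^sup>2)) * (u * VV - v * U) - t * SS)"

end

theory Submission imports Defs begin

definition acoef :: "nat \<Rightarrow> real" where "acoef n = (-1)^n / fact (2*n)"
definition FF :: "nat \<Rightarrow> real \<Rightarrow> real" where
  "FF k w = (\<Sum>n. (diffs ^^ k) acoef n * w^n)"

lemma acoef_summ: "summable (\<lambda>n. acoef n * w^n)"
proof (rule summable_comparison_test[OF _ summable_exp[of "\<bar>w\<bar>"]])
  show "\<exists>N. \<forall>n\<ge>N. norm (acoef n * w ^ n) \<le> inverse (fact n) * \<bar>w\<bar> ^ n"
  proof (intro exI allI impI)
    fix n :: nat
    have "fact n \<le> (fact (2*n) :: real)" by (rule fact_mono) auto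
    hence "inverse (fact (2*n)) \<le> (inverse (fact n) :: real)"
      by (simp add: le_imp_inverse_le)
    hence "inverse (fact (2*n)) * \<bar>w\<bar>^n \<le> inverse (fact n) * \<bar>w\<bar>^n"
      by (simp add: mult_right_mono)
    thus "norm (acoef n * w ^ n) \<le> inverse (fact n) * \<bar>w\<bar> ^ n"
      by (simp add: acoef_def abs_mult power_abs divide_inverse)
  qed
qed

lemma all_summ: "summable (\<lambda>n. (diffs ^^ k) acoef n * w^n)"
proof (induction k arbitrary: w)
  case 0 then show ?case using acoef_summ by simp
next
  case (Suc k) then show ?case by (simp add: termdiff_converges_all)
qed

lemma FF_deriv: "(FF k has_real_derivative FF (Suc k) w) (at w)"
proof -
  have "DERIV (\<lambda>x. \<Sum>n. (diffs ^^ k) acoef n * x^n) w :> (\<Sum>n. diffs ((diffs ^^ k) acoef) n * w^n)"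
    apply (rule termdiffs[where K="1 + \<bar>w\<bar>"])
    using all_summ[of k] all_summ[of "Suc k"] all_summ[of "Suc (Suc k)"] by auto
  thus ?thesis unfolding FF_def[abs_def] by simp
qed

lemma FF0_cos: "w \<ge> 0 \<Longrightarrow> FF 0 w = cos (sqrt w)"
proof -
  assume "w \<ge> 0"
  have "(\<lambda>n. (- 1) ^ n / (fact (2 * n)) * (sqrt w) ^ (2 * n)) sums cos (sqrt w)" by (rule cos_paired)
  moreover have "\<And>n. (sqrt w) ^ (2*n) = w ^ n" using \<open>w\<ge>0\<close> by (simp add: power_mult)
  ultimately have "(\<lambda>n. acoef n * w ^ n) sums cos (sqrt w)" by (simp add: acoef_def)
  thus ?thesis unfolding FF_def by (simp add: sums_iff)
qed


type_synonym R4 = "real \<times> real \<times> real \<times> real"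

inductive_set S0 :: "(R4 \<Rightarrow> real) set" where
  const: "(\<lambda>x. c) \<in> S0"
| lin: "(\<lambda>x. inner a x) \<in> S0"
| add: "f \<in> S0 \<Longrightarrow> g \<in> S0 \<Longrightarrow> (\<lambda>x. f x + g x) \<in> S0"
| mul: "f \<in> S0 \<Longrightarrow> g \<in> S0 \<Longrightarrow> (\<lambda>x. f x * g x) \<in> S0"
| comp: "f \<in> S0 \<Longrightarrow> (\<lambda>x. FF k (f x)) \<in> S0"

lemma S0_deriv: "f \<in> S0 \<Longrightarrow> \<exists>f'. (\<forall>x. (f has_derivative f' x) (at x)) \<and> (\<forall>v. (\<lambda>x. f' x v) \<in> S0)"
proof (induction rule: S0.induct)
  case (const c)
  show ?case by (rule exI[of _ "\<lambda>x v. 0"]) (auto intro: S0.const)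
next
  case (lin a)
  show ?case by (rule exI[of _ "\<lambda>x v. inner a v"]) (auto intro!: S0.const derivative_eq_intros)
next
  case (add f g)
  then obtain f' g' where f: "\<forall>x. (f has_derivative f' x) (at x)" "\<forall>v. (\<lambda>x. f' x v) \<in> S0"
    and g: "\<forall>x. (g has_derivative g' x) (at x)" "\<forall>v. (\<lambda>x. g' x v) \<in> S0" by blast
  show ?case
    by (rule exI[of _ "\<lambda>x v. f' x v + g' x v"]) (use f g in \<open>auto intro!: S0.add has_derivative_add\<close>)
next
  case (mul f g)
  then obtain f' g' where f: "\<forall>x. (f has_derivative f' x) (at x)" "\<forall>v. (\<lambda>x. f' x v) \<in> S0"
    and g: "\<forall>x. (g has_derivative g' x) (at x)" "\<forall>v. (\<lambda>x. g' x v) \<in> S0" by blast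
  show ?case
    by (rule exI[of _ "\<lambda>x v. f x * g' x v + f' x v * g x"])
       (use f g mul.hyps in \<open>auto intro!: S0.add S0.mul has_derivative_mult\<close>)
next
  case (comp f k)
  then obtain f' where f: "\<forall>x. (f has_derivative f' x) (at x)" "\<forall>v. (\<lambda>x. f' x v) \<in> S0" by blast
  have "\<And>x. ((\<lambda>x. FF k (f x)) has_derivative (\<lambda>v. FF (Suc k) (f x) * f' x v)) (at x)"
  proof -
    fix x
    have "(FF k has_derivative (\<lambda>h. h * FF (Suc k) (f x))) (at (f x))"
      using FF_deriv[of k "f x"] unfolding has_field_derivative_def by (simp add: mult.commute[of _ "FF (Suc k) (f x)"])
    from has_derivative_compose[OF f(1)[rule_format, of x] this]
    show "((\<lambda>x. FF k (f x)) has_derivative (\<lambda>v. FF (Suc k) (f x) * f' x v)) (at x)"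
      by (simp add: mult.commute o_def)
  qed
  then show ?case
    by (intro exI[of _ "\<lambda>x v. FF (Suc k) (f x) * f' x v"]) (use f comp.hyps in \<open>auto intro!: S0.mul S0.comp\<close>)
qed

lemma S0_Ck: "f \<in> S0 \<Longrightarrow> Ck_on k U f"
proof (induction k arbitrary: f)
  case 0
  then obtain f' where "\<forall>x. (f has_derivative f' x) (at x)" using S0_deriv by blast
  then show ?case by (auto intro!: continuous_at_imp_continuous_on has_derivative_continuous)
next
  case (Suc k)
  then obtain f' where "\<forall>x. (f has_derivative f' x) (at x)" "\<forall>v. (\<lambda>x. f' x v) \<in> S0" using S0_deriv by blast
  then show ?case using Suc.IH by (metis Ck_on.simps(2))
qed

lemma Ck_pair: "Ck_on k U f \<Longrightarrow> Ck_on k U g \<Longrightarrow> Ck_on k U (\<lambda>x. (f x, g x))"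
proof (induction k arbitrary: f g)
  case 0 then show ?case by (auto intro: continuous_on_Pair)
next
  case (Suc k)
  then obtain f' g' where f: "\<forall>x\<in>U. (f has_derivative f' x) (at x)" "\<forall>v. Ck_on k U (\<lambda>x. f' x v)"
    and g: "\<forall>x\<in>U. (g has_derivative g' x) (at x)" "\<forall>v. Ck_on k U (\<lambda>x. g' x v)" by auto
  show ?case
    apply simp
    apply (rule exI[of _ "\<lambda>x v. (f' x v, g' x v)"])
    using f g Suc.IH by (auto intro: has_derivative_Pair)
qed


lemma FF_cont: "continuous_on UNIV (FF k)"
  by (meson DERIV_isCont FF_deriv continuous_at_imp_continuous_on)

lemma FF_cont_on[continuous_intros]: "continuous_on A f \<Longrightarrow> continuous_on A (\<lambda>x. FF k (f x))"
  by (rule continuous_on_compose2[OF FF_cont]) auto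

lemma homeo_from_left_inverse:
  assumes "\<forall>x\<in>S. h (f x) = x" "continuous_on S f" "continuous_on (f ` S) h"
  shows "homeomorphism S (f ` S) f h"
  using assms unfolding homeomorphism_def by (auto simp: image_iff)

theorem mainTheorem3:
  fixes \<delta>0 \<epsilon> \<delta> C :: real
  assumes "\<delta>0 > 0" "\<epsilon> > 0" "\<delta> > 0" "C > 0"
  shows "\<exists>U g. smooth_open U (g :: real \<times> real \<times> real \<times> real \<Rightarrow> real \<times> real \<times> real \<times> real \<times> real)
      \<and> S_C C \<delta> \<subseteq> U
      \<and> g ` S_C C \<delta> \<subseteq> target_set \<delta>0 \<epsilon> \<delta>
      \<and> (\<exists>h. homeomorphism (S_C C \<delta>) ((proj_TS1 \<circ> g) ` S_C C \<delta>) (proj_TS1 \<circ> g) h)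
      \<and> (\<forall>w\<in>S_C C \<delta>. \<exists>L. (g has_derivative L) (at w) \<and> inj L
            \<and> (\<forall>V. contact_form (g w) (L V) = 0 \<longleftrightarrow> beta_form w V = 0))"
proof -
  define k where "k = min (\<epsilon> / (2*C)) (\<delta>/4)"
  have kpos: "k > 0" using assms by (simp add: k_def)
  have k1: "k * C \<le> \<epsilon>/2"
  proof -
    have "k * C \<le> (\<epsilon> / (2*C)) * C" using assms by (intro mult_right_mono) (auto simp: k_def)
    also have "\<dots> = \<epsilon>/2" using assms by (simp add: field_simps)
    finally show ?thesis .
  qed
  have k2: "k \<le> \<delta>/4" by (simp add: k_def)
  define g :: "R4 \<Rightarrow> real \<times> real \<times> real \<times> real \<times> real" where
    "g = (\<lambda>w. (fst w, fst (snd w), k * fst (snd (snd w)), fst (snd (snd w)),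
              snd (snd (snd w)) + k * FF 0 ((fst w)^2 + (fst (snd w))^2)))"
  have p1: "(\<lambda>w::R4. fst w) \<in> S0" proof -
    have "(\<lambda>w::R4. inner (1,0,0,0) w) = (\<lambda>w. fst w)" by (auto simp: fun_eq_iff)
    thus ?thesis using S0.lin[of "(1,0,0,0)"] by metis
  qed
  have p2: "(\<lambda>w::R4. fst (snd w)) \<in> S0" proof -
    have "(\<lambda>w::R4. inner (0,1,0,0) w) = (\<lambda>w. fst (snd w))" by (auto simp: fun_eq_iff)
    thus ?thesis using S0.lin[of "(0,1,0,0)"] by metis
  qed
  have p3: "(\<lambda>w::R4. fst (snd (snd w))) \<in> S0" proof -
    have "(\<lambda>w::R4. inner (0,0,1,0) w) = (\<lambda>w. fst (snd (snd w)))" by (auto simp: fun_eq_iff)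
    thus ?thesis using S0.lin[of "(0,0,1,0)"] by metis
  qed
  have p4: "(\<lambda>w::R4. snd (snd (snd w))) \<in> S0" proof -
    have "(\<lambda>w::R4. inner (0,0,0,1) w) = (\<lambda>w. snd (snd (snd w)))" by (auto simp: fun_eq_iff)
    thus ?thesis using S0.lin[of "(0,0,0,1)"] by metis
  qed
  have sq: "(\<lambda>w::R4. (fst w)^2 + (fst (snd w))^2) \<in> S0"
    using S0.add[OF S0.mul[OF p1 p1] S0.mul[OF p2 p2]] by (simp add: power2_eq_square)
  have c5: "(\<lambda>w::R4. snd (snd (snd w)) + k * FF 0 ((fst w)^2 + (fst (snd w))^2)) \<in> S0"
    by (rule S0.add[OF p4 S0.mul[OF S0.const S0.comp[OF sq]]])
  have c3: "(\<lambda>w::R4. k * fst (snd (snd w))) \<in> S0" by (rule S0.mul[OF S0.const p3])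
  have smooth: "smooth_open UNIV g"
    unfolding smooth_open_def g_def
    by (intro conjI allI open_UNIV Ck_pair S0_Ck[OF p1] S0_Ck[OF p2] S0_Ck[OF c3] S0_Ck[OF p3] S0_Ck[OF c5])
  have img: "g ` S_C C \<delta> \<subseteq> target_set \<delta>0 \<epsilon> \<delta>"
  proof
    fix y assume "y \<in> g ` S_C C \<delta>"
    then obtain u v s t where w: "(u,v,s,t) \<in> S_C C \<delta>" and y: "y = g (u,v,s,t)" by auto
    have a: "u^2+v^2 \<le> pi^2" "-C < s" "s < C" "- (\<delta>/2) < t" "t < \<delta>/2" using w by (auto simp: S_C_def)
    have "pi^2 < (pi + \<delta>0)^2" using assms by (simp add: power_strict_mono pi_gt_zero)
    hence A: "u^2+v^2 < (pi + \<delta>0)^2" using a by linarith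
    have "abs (k * s) \<le> k * C" using a kpos by (simp add: abs_mult)
    hence B: "abs (k * s) < \<epsilon>" using k1 assms by linarith
    have "\<bar>FF 0 (u^2+v^2)\<bar> \<le> 1" by (simp add: FF0_cos)
    hence "\<bar>k * FF 0 (u^2+v^2)\<bar> \<le> k" using kpos
      by (simp add: abs_mult mult_left_le)
    hence D: "\<bar>t + k * FF 0 (u^2+v^2)\<bar> < \<delta>" using a k2 by linarith
    show "y \<in> target_set \<delta>0 \<epsilon> \<delta>" using A B D by (simp add: y g_def target_set_def)
  qed
  define h :: "real \<times> real \<times> real \<times> complex \<times> real \<Rightarrow> R4" where
    "h = (\<lambda>y. (fst y, fst (snd y), fst (snd (snd y)) / k,
              snd (snd (snd (snd y))) - k * FF 0 ((fst y)^2 + (fst (snd y))^2)))"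
  have homeo: "homeomorphism (S_C C \<delta>) ((proj_TS1 \<circ> g) ` S_C C \<delta>) (proj_TS1 \<circ> g) h"
  proof (rule homeo_from_left_inverse)
    show "\<forall>x\<in>S_C C \<delta>. h ((proj_TS1 \<circ> g) x) = x"
      using kpos by (auto simp: h_def g_def proj_TS1_def)
    have "(proj_TS1 \<circ> g) = (\<lambda>w. (fst w, fst (snd w), k * fst (snd (snd w)), cis (fst (snd (snd w))),
              snd (snd (snd w)) + k * FF 0 ((fst w)^2 + (fst (snd w))^2)))"
      by (auto simp: g_def proj_TS1_def fun_eq_iff case_prod_unfold)
    thus "continuous_on (S_C C \<delta>) (proj_TS1 \<circ> g)"
      by (auto intro!: continuous_intros)
    show "continuous_on ((proj_TS1 \<circ> g) ` S_C C \<delta>) h"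
      using kpos unfolding h_def by (auto intro!: continuous_intros)
  qed
  have deriv: "\<forall>w\<in>S_C C \<delta>. \<exists>L. (g has_derivative L) (at w) \<and> inj L
            \<and> (\<forall>V. contact_form (g w) (L V) = 0 \<longleftrightarrow> beta_form w V = 0)"
  proof
    fix w :: R4 assume "w \<in> S_C C \<delta>"
    obtain u v s t where wd: "w = (u,v,s,t)" by (cases w) auto
    define L where "L = (\<lambda>V::R4. (fst V, fst (snd V), k * fst (snd (snd V)), fst (snd (snd V)),
       snd (snd (snd V)) + k * ((2 * fst w * fst V + 2 * fst (snd w) * fst (snd V)) * FF 1 ((fst w)^2 + (fst (snd w))^2))))"
    have dsq: "((\<lambda>w::R4. (fst w)^2 + (fst (snd w))^2) has_derivative
         (\<lambda>V. 2 * fst w * fst V + 2 * fst (snd w) * fst (snd V))) (at w)"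
      by (auto intro!: derivative_eq_intros simp: algebra_simps)
    have dF: "((\<lambda>w::R4. FF 0 ((fst w)^2 + (fst (snd w))^2)) has_derivative
         (\<lambda>V. (2 * fst w * fst V + 2 * fst (snd w) * fst (snd V)) * FF 1 ((fst w)^2 + (fst (snd w))^2))) (at w)"
      using DERIV_compose_FDERIV[OF FF_deriv[of 0] dsq] by simp
    have D: "(g has_derivative L) (at w)"
      unfolding g_def L_def
      by (auto intro!: derivative_eq_intros dF)
    have I: "inj L"
      by (auto simp: inj_def L_def prod_eq_iff kpos)
    have K: "contact_form (g w) (L V) = beta_form w V" for V
    proof -
      obtain U VV S T where Vd: "V = (U,VV,S,T)" by (cases V) auto
      show ?thesis
        by (simp add: wd Vd g_def L_def contact_form_def beta_form_def Let_def FF0_cos algebra_simps)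
    qed
    show "\<exists>L. (g has_derivative L) (at w) \<and> inj L
            \<and> (\<forall>V. contact_form (g w) (L V) = 0 \<longleftrightarrow> beta_form w V = 0)"
      using D I K by auto
  qed
  show ?thesis
    apply (rule exI[of _ UNIV], rule exI[of _ g])
    using smooth img homeo deriv by auto
qed

end
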